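(* Let $\mathbb{C}$ be a cartesian monoidal category and $T$ an observational commutative monad on $\mathbb{C}$ such that for every object $Y$ the pair $\eta_{TY},T\eta_Y:TY\to TTY$ has an equalizer $\theta_Y:DY\to TY$. Then for all objects $X,Y$, composition with $\theta_Y$ gives a bijection between morphisms $X\to DY$ in $\mathbb{C}$ and deterministic Kleisli morphisms $X\rightsquigarrow Y$ of $\mathsf{Kl}(T)$ (i.e. $f:X\rightsquigarrow Y$ is deterministic iff $f^\sharp$ factors, necessarily uniquely, through $\theta_Y$); thus the submonad $D$ of $T$ has as Kleisli morphisms exactly the deterministic morphisms of $\mathsf{Kl}(T)$.
   Context: $\mathbb{C}$ has finite products; $T=(T,\eta,\mu)$ is a commutative monad with monoidal structure $\nabla_{A,B}:TA\times TB\to T(A\times B)$. $\mathsf{Kl}(T)$: morphisms $f:A\rightsquigarrow B$ correspond to $f^\sharp:A\to TB$, composition $(g\circledcirc f)^\sharp=\mu\circ T(g^\sharp)\circ f^\sharp$, identities $\eta$; tensor $\otimes$ is $\times$ on objects and $(f\otimes g)^\sharp=\nabla\circ(f^\sharp\times g^\sharp)$. $\mathsf{copy}_X^\sharp=\eta\circ\Delta_X$, $\mathsf{del}_X^\sharp=\eta\circ !_X$. A Kleisli morphism $f:X\rightsquigarrow Y$ is deterministic if $\mathsf{copy}_Y\circledcirc f=(f\otimes f)\circledcirc\mathsf{copy}_X$ and $\mathsf{del}_Y\circledcirc f=\mathsf{del}_X$. $\mathsf{force}_A:TA\rightsquigarrow A$ has $\mathsf{force}_A^\sharp=1_{TA}$;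 $\mathsf{copy}_n:TX\rightsquigarrow(TX)^{\otimes n}$ has $\mathsf{copy}_n^\sharp=\eta\circ\Delta_n$ with $\Delta_n$ the $n$-fold diagonal; $\mathsf{samp}_n=\mathsf{force}^{\otimes n}\circledcirc\mathsf{copy}_n:TX\rightsquigarrow X^{\otimes n}$. $T$ is observational if for every $X$ the family $(\mathsf{samp}_n)_{n\in\mathbb{N}}$ is jointly monic in $\mathsf{Kl}(T)$. The object $D Y$ becomes a monad $D$ (a submonad of $T$ via $\theta$): for $g:Y\to Z$... more precisely, its unit $e_X:X\to DX$ is the unique map with $\theta_X\circ e_X=\eta_X$, and its Kleisli morphisms $X\to DY$ are identified, via $h\mapsto(\theta_Y\circ h)^\flat$, with Kleisli morphisms of $T$. *)

theory Defs
  imports Main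
begin

text \<open>A category is presented by a set of objects, hom-sets, composition
  (written cmp g f for "g after f") and identities.\<close>

record ('o, 'm) cartcat =
  Ob   :: "'o set"
  Hom  :: "'o \<Rightarrow> 'o \<Rightarrow> 'm set"
  cmp  :: "'m \<Rightarrow> 'm \<Rightarrow> 'm"
  idt  :: "'o \<Rightarrow> 'm"
  one  :: "'o"
  bang :: "'o \<Rightarrow> 'm"
  prd  :: "'o \<Rightarrow> 'o \<Rightarrow> 'o"
  pr1  :: "'o \<Rightarrow> 'o \<Rightarrow> 'm"
  pr2  :: "'o \<Rightarrow> 'o \<Rightarrow> 'm"
  tup  :: "'m \<Rightarrow> 'm \<Rightarrow> 'm"

definition is_category :: "('o, 'm) cartcat \<Rightarrow> bool" where
  "is_category C \<longleftrightarrow>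
     (\<forall>A B. Hom C A B \<noteq> {} \<longrightarrow> A \<in> Ob C \<and> B \<in> Ob C) \<and>
     (\<forall>A\<in>Ob C. idt C A \<in> Hom C A A) \<and>
     (\<forall>A B E f g. f \<in> Hom C A B \<longrightarrow> g \<in> Hom C B E \<longrightarrow> cmp C g f \<in> Hom C A E) \<and>
     (\<forall>A B f. f \<in> Hom C A B \<longrightarrow> cmp C (idt C B) f = f \<and> cmp C f (idt C A) = f) \<and>
     (\<forall>A B E F f g h. f \<in> Hom C A B \<longrightarrow> g \<in> Hom C B E \<longrightarrow> h \<in> Hom C E F \<longrightarrow>
         cmp C h (cmp C g f) = cmp C (cmp C h g) f)"

definition is_cartesian_category :: "('o, 'm) cartcat \<Rightarrow> bool" where
  "is_cartesian_category C \<longleftrightarrow> is_category C \<and>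
     one C \<in> Ob C \<and>
     (\<forall>A\<in>Ob C. bang C A \<in> Hom C A (one C)) \<and>
     (\<forall>A f. f \<in> Hom C A (one C) \<longrightarrow> f = bang C A) \<and>
     (\<forall>A\<in>Ob C. \<forall>B\<in>Ob C. prd C A B \<in> Ob C \<and>
         pr1 C A B \<in> Hom C (prd C A B) A \<and> pr2 C A B \<in> Hom C (prd C A B) B) \<and>
     (\<forall>X A B f g. f \<in> Hom C X A \<longrightarrow> g \<in> Hom C X B \<longrightarrow>
         tup C f g \<in> Hom C X (prd C A B) \<and>
         cmp C (pr1 C A B) (tup C f g) = f \<and> cmp C (pr2 C A B) (tup C f g) = g) \<and>
     (\<forall>X A B h. A \<in> Ob C \<longrightarrow> B \<in> Ob C \<longrightarrow> h \<in> Hom C X (prd C A B) \<longrightarrow>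
         h = tup C (cmp C (pr1 C A B) h) (cmp C (pr2 C A B) h))"

definition fprod :: "('o, 'm) cartcat \<Rightarrow> 'o \<Rightarrow> 'o \<Rightarrow> 'm \<Rightarrow> 'm \<Rightarrow> 'm" where
  "fprod C A B f g = tup C (cmp C f (pr1 C A B)) (cmp C g (pr2 C A B))"

definition diag :: "('o, 'm) cartcat \<Rightarrow> 'o \<Rightarrow> 'm" where
  "diag C A = tup C (idt C A) (idt C A)"

definition assoc :: "('o, 'm) cartcat \<Rightarrow> 'o \<Rightarrow> 'o \<Rightarrow> 'o \<Rightarrow> 'm" where
  "assoc C A B E = tup C (cmp C (pr1 C A B) (pr1 C (prd C A B) E))
     (tup C (cmp C (pr2 C A B) (pr1 C (prd C A B) E)) (pr2 C (prd C A B) E))"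

definition swap :: "('o, 'm) cartcat \<Rightarrow> 'o \<Rightarrow> 'o \<Rightarrow> 'm" where
  "swap C A B = tup C (pr2 C A B) (pr1 C A B)"

primrec opow :: "('o, 'm) cartcat \<Rightarrow> 'o \<Rightarrow> nat \<Rightarrow> 'o" where
  "opow C X 0 = one C"
| "opow C X (Suc n) = prd C (opow C X n) X"

primrec ndiag :: "('o, 'm) cartcat \<Rightarrow> 'o \<Rightarrow> nat \<Rightarrow> 'm" where
  "ndiag C X 0 = bang C X"
| "ndiag C X (Suc n) = tup C (ndiag C X n) (idt C X)"

record ('o, 'm) cmonad =
  Tob   :: "'o \<Rightarrow> 'o"
  Tar   :: "'m \<Rightarrow> 'm"
  eta   :: "'o \<Rightarrow> 'm"
  mu    :: "'o \<Rightarrow> 'm"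
  nabla :: "'o \<Rightarrow> 'o \<Rightarrow> 'm"

definition is_monad :: "('o, 'm) cartcat \<Rightarrow> ('o, 'm) cmonad \<Rightarrow> bool" where
  "is_monad C M \<longleftrightarrow>
     (\<forall>A\<in>Ob C. Tob M A \<in> Ob C) \<and>
     (\<forall>A B f. f \<in> Hom C A B \<longrightarrow> Tar M f \<in> Hom C (Tob M A) (Tob M B)) \<and>
     (\<forall>A\<in>Ob C. Tar M (idt C A) = idt C (Tob M A)) \<and>
     (\<forall>A B E f g. f \<in> Hom C A B \<longrightarrow> g \<in> Hom C B E \<longrightarrow>
         Tar M (cmp C g f) = cmp C (Tar M g) (Tar M f)) \<and>
     (\<forall>A\<in>Ob C. eta M A \<in> Hom C A (Tob M A)) \<and>
     (\<forall>A\<in>Ob C. mu M A \<in> Hom C (Tob M (Tob M A)) (Tob M A)) \<and>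
     (\<forall>A B f. f \<in> Hom C A B \<longrightarrow> cmp C (Tar M f) (eta M A) = cmp C (eta M B) f) \<and>
     (\<forall>A B f. f \<in> Hom C A B \<longrightarrow>
         cmp C (Tar M f) (mu M A) = cmp C (mu M B) (Tar M (Tar M f))) \<and>
     (\<forall>A\<in>Ob C. cmp C (mu M A) (eta M (Tob M A)) = idt C (Tob M A)) \<and>
     (\<forall>A\<in>Ob C. cmp C (mu M A) (Tar M (eta M A)) = idt C (Tob M A)) \<and>
     (\<forall>A\<in>Ob C. cmp C (mu M A) (Tar M (mu M A)) = cmp C (mu M A) (mu M (Tob M A)))"

text \<open>Commutative monad: a monad whose monoidal structure nabla makes it a
  symmetric monoidal monad with respect to the cartesian structure
  (naturality, associativity, unit laws, symmetry, compatibility with eta, mu).\<close>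

definition is_commutative_monad :: "('o, 'm) cartcat \<Rightarrow> ('o, 'm) cmonad \<Rightarrow> bool" where
  "is_commutative_monad C M \<longleftrightarrow> is_monad C M \<and>
     (\<forall>A\<in>Ob C. \<forall>B\<in>Ob C. nabla M A B \<in>
         Hom C (prd C (Tob M A) (Tob M B)) (Tob M (prd C A B))) \<and>
     (\<forall>A A' B B' f g. f \<in> Hom C A A' \<longrightarrow> g \<in> Hom C B B' \<longrightarrow>
         cmp C (Tar M (fprod C A B f g)) (nabla M A B) =
         cmp C (nabla M A' B') (fprod C (Tob M A) (Tob M B) (Tar M f) (Tar M g))) \<and>
     (\<forall>A\<in>Ob C. \<forall>B\<in>Ob C.
         cmp C (nabla M A B) (fprod C A B (eta M A) (eta M B)) = eta M (prd C A B)) \<and>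
     (\<forall>A\<in>Ob C. \<forall>B\<in>Ob C.
         cmp C (nabla M A B) (fprod C (Tob M (Tob M A)) (Tob M (Tob M B)) (mu M A) (mu M B)) =
         cmp C (mu M (prd C A B))
           (cmp C (Tar M (nabla M A B)) (nabla M (Tob M A) (Tob M B)))) \<and>
     (\<forall>A\<in>Ob C. \<forall>B\<in>Ob C. \<forall>E\<in>Ob C.
         cmp C (Tar M (assoc C A B E))
           (cmp C (nabla M (prd C A B) E)
              (fprod C (prd C (Tob M A) (Tob M B)) (Tob M E) (nabla M A B) (idt C (Tob M E)))) =
         cmp C (nabla M A (prd C B E))
           (cmp C (fprod C (Tob M A) (prd C (Tob M B) (Tob M E)) (idt C (Tob M A)) (nabla M B E))
              (assoc C (Tob M A) (Tob M B) (Tob M E)))) \<and>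
     (\<forall>A\<in>Ob C.
         cmp C (Tar M (pr2 C (one C) A))
           (cmp C (nabla M (one C) A) (fprod C (one C) (Tob M A) (eta M (one C)) (idt C (Tob M A))))
         = pr2 C (one C) (Tob M A)) \<and>
     (\<forall>A\<in>Ob C.
         cmp C (Tar M (pr1 C A (one C)))
           (cmp C (nabla M A (one C)) (fprod C (Tob M A) (one C) (idt C (Tob M A)) (eta M (one C))))
         = pr1 C (Tob M A) (one C)) \<and>
     (\<forall>A\<in>Ob C. \<forall>B\<in>Ob C.
         cmp C (Tar M (swap C A B)) (nabla M A B) =
         cmp C (nabla M B A) (swap C (Tob M A) (Tob M B)))"

text \<open>Kleisli category Kl(T): a Kleisli morphism f : X \<leadsto> Y is represented by
  its transpose f# \<in> Hom X (T Y).\<close>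

definition kcomp :: "('o, 'm) cartcat \<Rightarrow> ('o, 'm) cmonad \<Rightarrow> 'o \<Rightarrow> 'm \<Rightarrow> 'm \<Rightarrow> 'm" where
  "kcomp C M Z g f = cmp C (mu M Z) (cmp C (Tar M g) f)"
  \<comment> \<open>(g \<circledcirc> f)# for g : Y \<leadsto> Z\<close>

definition ktensor :: "('o, 'm) cartcat \<Rightarrow> ('o, 'm) cmonad \<Rightarrow> 'o \<Rightarrow> 'o \<Rightarrow> 'o \<Rightarrow> 'o \<Rightarrow> 'm \<Rightarrow> 'm \<Rightarrow> 'm" where
  "ktensor C M A B A' B' f g = cmp C (nabla M A' B') (fprod C A B f g)"
  \<comment> \<open>(f \<otimes> g)# for f : A \<leadsto> A', g : B \<leadsto> B'\<close>

definition kcopy :: "('o, 'm) cartcat \<Rightarrow> ('o, 'm) cmonad \<Rightarrow> 'o \<Rightarrow> 'm" where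
  "kcopy C M X = cmp C (eta M (prd C X X)) (diag C X)"

definition kdel :: "('o, 'm) cartcat \<Rightarrow> ('o, 'm) cmonad \<Rightarrow> 'o \<Rightarrow> 'm" where
  "kdel C M X = cmp C (eta M (one C)) (bang C X)"

definition deterministic :: "('o, 'm) cartcat \<Rightarrow> ('o, 'm) cmonad \<Rightarrow> 'o \<Rightarrow> 'o \<Rightarrow> 'm \<Rightarrow> bool" where
  "deterministic C M X Y f \<longleftrightarrow>
     kcomp C M (prd C Y Y) (kcopy C M Y) f =
       kcomp C M (prd C Y Y) (ktensor C M X X Y Y f f) (kcopy C M X) \<and>
     kcomp C M (one C) (kdel C M Y) f = kdel C M X"

text \<open>force_A : T A \<leadsto> A with force# = id; its n-fold tensor power
  force^{\<otimes>n} : (T X)^n \<leadsto> X^n (the empty tensor is the Kleisli identity on 1);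
  copy_n and samp_n.\<close>

definition kforce :: "('o, 'm) cartcat \<Rightarrow> ('o, 'm) cmonad \<Rightarrow> 'o \<Rightarrow> 'm" where
  "kforce C M A = idt C (Tob M A)"

primrec kforce_pow :: "('o, 'm) cartcat \<Rightarrow> ('o, 'm) cmonad \<Rightarrow> 'o \<Rightarrow> nat \<Rightarrow> 'm" where
  "kforce_pow C M X 0 = eta M (one C)"
| "kforce_pow C M X (Suc n) =
     ktensor C M (opow C (Tob M X) n) (Tob M X) (opow C X n) X
       (kforce_pow C M X n) (kforce C M X)"

definition kcopy_n :: "('o, 'm) cartcat \<Rightarrow> ('o, 'm) cmonad \<Rightarrow> 'o \<Rightarrow> nat \<Rightarrow> 'm" where
  "kcopy_n C M X n = cmp C (eta M (opow C (Tob M X) n)) (ndiag C (Tob M X) n)"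

definition samp :: "('o, 'm) cartcat \<Rightarrow> ('o, 'm) cmonad \<Rightarrow> 'o \<Rightarrow> nat \<Rightarrow> 'm" where
  "samp C M X n = kcomp C M (opow C X n) (kforce_pow C M X n) (kcopy_n C M X n)"

text \<open>Observational: for every X the family samp_n : T X \<leadsto> X^n is jointly
  monic in Kl(T).\<close>

definition observational :: "('o, 'm) cartcat \<Rightarrow> ('o, 'm) cmonad \<Rightarrow> bool" where
  "observational C M \<longleftrightarrow>
     (\<forall>X\<in>Ob C. \<forall>A\<in>Ob C. \<forall>f g.
        f \<in> Hom C A (Tob M (Tob M X)) \<longrightarrow> g \<in> Hom C A (Tob M (Tob M X)) \<longrightarrow>
        (\<forall>n. kcomp C M (opow C X n) (samp C M X n) f =
             kcomp C M (opow C X n) (samp C M X n) g) \<longrightarrow> f = g)"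

definition is_equalizer :: "('o, 'm) cartcat \<Rightarrow> 'o \<Rightarrow> 'o \<Rightarrow> 'm \<Rightarrow> 'm \<Rightarrow> 'o \<Rightarrow> 'm \<Rightarrow> bool" where
  "is_equalizer C A B f g E e \<longleftrightarrow>
     E \<in> Ob C \<and> e \<in> Hom C E A \<and> cmp C f e = cmp C g e \<and>
     (\<forall>Z h. h \<in> Hom C Z A \<longrightarrow> cmp C f h = cmp C g h \<longrightarrow>
        (\<exists>!k. k \<in> Hom C Z E \<and> cmp C e k = h))"

end

theory Submission
  imports Defs
begin

locale cm =
  fixes C :: "('o, 'm) cartcat" and M :: "('o, 'm) cmonad"
  assumes cc: "is_cartesian_category C" and cmon: "is_commutative_monad C M"
begin

lemma cat: "is_category C" using cc unfolding is_cartesian_category_def by simp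

lemma hom_ob: "f \<in> Hom C A B \<Longrightarrow> A \<in> Ob C \<and> B \<in> Ob C"
  using cat unfolding is_category_def by (elim conjE) blast
lemma id_hom: "A \<in> Ob C \<Longrightarrow> idt C A \<in> Hom C A A"
  using cat unfolding is_category_def by (elim conjE) simp
lemma comp_hom: "f \<in> Hom C A B \<Longrightarrow> g \<in> Hom C B E \<Longrightarrow> cmp C g f \<in> Hom C A E"
  using cat unfolding is_category_def by (elim conjE) simp
lemma id_l: "f \<in> Hom C A B \<Longrightarrow> cmp C (idt C B) f = f"
  using cat unfolding is_category_def by (elim conjE) simp
lemma id_r: "f \<in> Hom C A B \<Longrightarrow> cmp C f (idt C A) = f"
  using cat unfolding is_category_def by (elim conjE) simp
lemma cassoc: "f \<in> Hom C A B \<Longrightarrow> g \<in> Hom C B E \<Longrightarrow> h \<in> Hom C E F \<Longrightarrow>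
         cmp C h (cmp C g f) = cmp C (cmp C h g) f"
  using cat unfolding is_category_def by (elim conjE) simp
lemma one_ob: "one C \<in> Ob C"
  using cc unfolding is_cartesian_category_def by (elim conjE) blast
lemma bang_hom: "A \<in> Ob C \<Longrightarrow> bang C A \<in> Hom C A (one C)"
  using cc unfolding is_cartesian_category_def by (elim conjE) blast
lemma bang_uniq: "f \<in> Hom C A (one C) \<Longrightarrow> f = bang C A"
  using cc unfolding is_cartesian_category_def by (elim conjE) blast
lemma prd_ob: "A \<in> Ob C \<Longrightarrow> B \<in> Ob C \<Longrightarrow> prd C A B \<in> Ob C"
  using cc unfolding is_cartesian_category_def by (elim conjE) blast
lemma pr1_hom: "A \<in> Ob C \<Longrightarrow> B \<in> Ob C \<Longrightarrow> pr1 C A B \<in> Hom C (prd C A B) A"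
  using cc unfolding is_cartesian_category_def by (elim conjE) blast
lemma pr2_hom: "A \<in> Ob C \<Longrightarrow> B \<in> Ob C \<Longrightarrow> pr2 C A B \<in> Hom C (prd C A B) B"
  using cc unfolding is_cartesian_category_def by (elim conjE) blast
lemma tup_hom: "f \<in> Hom C X A \<Longrightarrow> g \<in> Hom C X B \<Longrightarrow> tup C f g \<in> Hom C X (prd C A B)"
  using cc unfolding is_cartesian_category_def by (elim conjE) blast
lemma pr1_tup: "f \<in> Hom C X A \<Longrightarrow> g \<in> Hom C X B \<Longrightarrow> cmp C (pr1 C A B) (tup C f g) = f"
  using cc unfolding is_cartesian_category_def by (elim conjE) blast
lemma pr2_tup: "f \<in> Hom C X A \<Longrightarrow> g \<in> Hom C X B \<Longrightarrow> cmp C (pr2 C A B) (tup C f g) = g"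
  using cc unfolding is_cartesian_category_def by (elim conjE) blast
lemma tup_eta: "A \<in> Ob C \<Longrightarrow> B \<in> Ob C \<Longrightarrow> h \<in> Hom C X (prd C A B) \<Longrightarrow>
         h = tup C (cmp C (pr1 C A B) h) (cmp C (pr2 C A B) h)"
  using cc unfolding is_cartesian_category_def by (elim conjE) blast

lemma mon: "is_monad C M" using cmon unfolding is_commutative_monad_def by (elim conjE) blast

lemma Tob_ob: "A \<in> Ob C \<Longrightarrow> Tob M A \<in> Ob C"
  using mon unfolding is_monad_def by (elim conjE) blast
lemma Tar_hom: "f \<in> Hom C A B \<Longrightarrow> Tar M f \<in> Hom C (Tob M A) (Tob M B)"
  using mon unfolding is_monad_def by (elim conjE) blast
lemma Tar_id: "A \<in> Ob C \<Longrightarrow> Tar M (idt C A) = idt C (Tob M A)"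
  using mon unfolding is_monad_def by (elim conjE) blast
lemma Tar_comp: "f \<in> Hom C A B \<Longrightarrow> g \<in> Hom C B E \<Longrightarrow>
         Tar M (cmp C g f) = cmp C (Tar M g) (Tar M f)"
  using mon unfolding is_monad_def by (elim conjE) blast
lemma eta_hom: "A \<in> Ob C \<Longrightarrow> eta M A \<in> Hom C A (Tob M A)"
  using mon unfolding is_monad_def by (elim conjE) blast
lemma mu_hom: "A \<in> Ob C \<Longrightarrow> mu M A \<in> Hom C (Tob M (Tob M A)) (Tob M A)"
  using mon unfolding is_monad_def by (elim conjE) blast
lemma eta_nat: "f \<in> Hom C A B \<Longrightarrow> cmp C (Tar M f) (eta M A) = cmp C (eta M B) f"
  using mon unfolding is_monad_def by (elim conjE) blast
lemma mu_eta: "A \<in> Ob C \<Longrightarrow> cmp C (mu M A) (eta M (Tob M A)) = idt C (Tob M A)"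
  using mon unfolding is_monad_def by (elim conjE) blast
lemma mu_Teta: "A \<in> Ob C \<Longrightarrow> cmp C (mu M A) (Tar M (eta M A)) = idt C (Tob M A)"
  using mon unfolding is_monad_def by (elim conjE) blast
lemma nabla_hom: "A \<in> Ob C \<Longrightarrow> B \<in> Ob C \<Longrightarrow> nabla M A B \<in>
         Hom C (prd C (Tob M A) (Tob M B)) (Tob M (prd C A B))"
  using cmon unfolding is_commutative_monad_def by (elim conjE) blast
lemma nabla_nat: "f \<in> Hom C A A' \<Longrightarrow> g \<in> Hom C B B' \<Longrightarrow>
         cmp C (Tar M (fprod C A B f g)) (nabla M A B) =
         cmp C (nabla M A' B') (fprod C (Tob M A) (Tob M B) (Tar M f) (Tar M g))"
  using cmon unfolding is_commutative_monad_def by (elim conjE) blast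
lemma nabla_eta: "A \<in> Ob C \<Longrightarrow> B \<in> Ob C \<Longrightarrow>
         cmp C (nabla M A B) (fprod C A B (eta M A) (eta M B)) = eta M (prd C A B)"
  using cmon unfolding is_commutative_monad_def by (elim conjE) blast


lemma tup_comp:
  assumes f: "f \<in> Hom C Z A" and g: "g \<in> Hom C Z B" and k: "k \<in> Hom C W Z"
  shows "cmp C (tup C f g) k = tup C (cmp C f k) (cmp C g k)"
proof -
  have A: "A \<in> Ob C" and B: "B \<in> Ob C" using f g hom_ob by blast+
  have t: "tup C f g \<in> Hom C Z (prd C A B)" using f g tup_hom by blast
  have h: "cmp C (tup C f g) k \<in> Hom C W (prd C A B)" using t k comp_hom by blast
  have 1: "cmp C (pr1 C A B) (cmp C (tup C f g) k) = cmp C f k"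
    using cassoc[OF k t pr1_hom[OF A B]] pr1_tup[OF f g] by simp
  have 2: "cmp C (pr2 C A B) (cmp C (tup C f g) k) = cmp C g k"
    using cassoc[OF k t pr2_hom[OF A B]] pr2_tup[OF f g] by simp
  show ?thesis using tup_eta[OF A B h] 1 2 by simp
qed

lemma fprod_hom:
  assumes f: "f \<in> Hom C A A'" and g: "g \<in> Hom C B B'"
  shows "fprod C A B f g \<in> Hom C (prd C A B) (prd C A' B')"
proof -
  have A: "A \<in> Ob C" and B: "B \<in> Ob C" using f g hom_ob by blast+
  show ?thesis unfolding fprod_def
    by (intro tup_hom comp_hom[OF pr1_hom[OF A B] f] comp_hom[OF pr2_hom[OF A B] g])
qed

lemma fprod_tup:
  assumes f: "f \<in> Hom C A A'" and g: "g \<in> Hom C B B'"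
    and a: "a \<in> Hom C Z A" and b: "b \<in> Hom C Z B"
  shows "cmp C (fprod C A B f g) (tup C a b) = tup C (cmp C f a) (cmp C g b)"
proof -
  have A: "A \<in> Ob C" and B: "B \<in> Ob C" using f g hom_ob by blast+
  have t: "tup C a b \<in> Hom C Z (prd C A B)" using a b tup_hom by blast
  have "cmp C (fprod C A B f g) (tup C a b) =
     tup C (cmp C (cmp C f (pr1 C A B)) (tup C a b)) (cmp C (cmp C g (pr2 C A B)) (tup C a b))"
    unfolding fprod_def
    by (rule tup_comp[OF comp_hom[OF pr1_hom[OF A B] f] comp_hom[OF pr2_hom[OF A B] g] t])
  also have "\<dots> = tup C (cmp C f a) (cmp C g b)"
    using cassoc[OF t pr1_hom[OF A B] f, symmetric] cassoc[OF t pr2_hom[OF A B] g, symmetric]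
      pr1_tup[OF a b] pr2_tup[OF a b] by simp
  finally show ?thesis .
qed

lemma diag_hom: "A \<in> Ob C \<Longrightarrow> diag C A \<in> Hom C A (prd C A A)"
  unfolding diag_def by (intro tup_hom id_hom)

lemma diag_comp: "f \<in> Hom C A B \<Longrightarrow> cmp C (diag C B) f = tup C f f"
  unfolding diag_def
  by (metis hom_ob id_hom id_l tup_comp)

lemma opow_ob: "X \<in> Ob C \<Longrightarrow> opow C X n \<in> Ob C"
  by (induction n) (auto simp: one_ob prd_ob)

lemma ndiag_hom: "X \<in> Ob C \<Longrightarrow> ndiag C X n \<in> Hom C X (opow C X n)"
  by (induction n) (auto simp: bang_hom intro: tup_hom id_hom)

lemma kforce_pow_hom:
  assumes X: "X \<in> Ob C"
  shows "kforce_pow C M X n \<in> Hom C (opow C (Tob M X) n) (Tob M (opow C X n))"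
proof (induction n)
  case 0 then show ?case by (simp add: eta_hom one_ob)
next
  case (Suc n)
  have k: "kforce C M X \<in> Hom C (Tob M X) (Tob M X)" unfolding kforce_def using X
    by (intro id_hom Tob_ob)
  have F: "fprod C (opow C (Tob M X) n) (Tob M X) (kforce_pow C M X n) (kforce C M X)
     \<in> Hom C (prd C (opow C (Tob M X) n) (Tob M X)) (prd C (Tob M (opow C X n)) (Tob M X))"
    by (rule fprod_hom[OF Suc k])
  show ?case unfolding kforce_pow.simps ktensor_def opow.simps
    by (rule comp_hom[OF F nabla_hom[OF opow_ob[OF X] X]])
qed

lemma kl_eta:
  assumes g: "g \<in> Hom C B (Tob M E)" and f: "f \<in> Hom C A B" and E: "E \<in> Ob C"
  shows "cmp C (mu M E) (cmp C (Tar M g) (cmp C (eta M B) f)) = cmp C g f"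
proof -
  have B: "B \<in> Ob C" using g hom_ob by blast
  have E': "Tob M E \<in> Ob C" using E Tob_ob by blast
  have "cmp C (Tar M g) (cmp C (eta M B) f) = cmp C (cmp C (Tar M g) (eta M B)) f"
    using cassoc[OF f eta_hom[OF B] Tar_hom[OF g]] .
  also have "\<dots> = cmp C (cmp C (eta M (Tob M E)) g) f" using eta_nat[OF g] by simp
  also have "\<dots> = cmp C (eta M (Tob M E)) (cmp C g f)"
    using cassoc[OF f g eta_hom[OF E']] by simp
  finally have "cmp C (mu M E) (cmp C (Tar M g) (cmp C (eta M B) f)) =
     cmp C (mu M E) (cmp C (eta M (Tob M E)) (cmp C g f))" by simp
  also have "\<dots> = cmp C (cmp C (mu M E) (eta M (Tob M E))) (cmp C g f)"
    using cassoc[OF comp_hom[OF f g] eta_hom[OF E'] mu_hom[OF E]] .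
  also have "\<dots> = cmp C g f" using mu_eta[OF E] id_l[OF comp_hom[OF f g]] by simp
  finally show ?thesis .
qed

lemma kl_Teta_eta:
  assumes f: "f \<in> Hom C A (Tob M B)" and g: "g \<in> Hom C B E"
  shows "cmp C (mu M E) (cmp C (Tar M (cmp C (eta M E) g)) f) = cmp C (Tar M g) f"
proof -
  have E: "E \<in> Ob C" using g hom_ob by blast
  have Tg: "Tar M g \<in> Hom C (Tob M B) (Tob M E)" using Tar_hom[OF g] .
  have Te: "Tar M (eta M E) \<in> Hom C (Tob M E) (Tob M (Tob M E))" using Tar_hom[OF eta_hom[OF E]] .
  have "cmp C (mu M E) (cmp C (Tar M (cmp C (eta M E) g)) f) =
        cmp C (mu M E) (cmp C (Tar M (eta M E)) (cmp C (Tar M g) f))"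
    using Tar_comp[OF g eta_hom[OF E]] cassoc[OF f Tg Te] by simp
  also have "\<dots> = cmp C (cmp C (mu M E) (Tar M (eta M E))) (cmp C (Tar M g) f)"
    using cassoc[OF comp_hom[OF f Tg] Te mu_hom[OF E]] .
  also have "\<dots> = cmp C (Tar M g) f" using mu_Teta[OF E] id_l[OF comp_hom[OF f Tg]] by simp
  finally show ?thesis .
qed

lemma det_iff:
  assumes f: "f \<in> Hom C X (Tob M Y)" and Y: "Y \<in> Ob C"
  shows "deterministic C M X Y f \<longleftrightarrow>
     (cmp C (Tar M (diag C Y)) f = cmp C (nabla M Y Y) (tup C f f) \<and>
      cmp C (Tar M (bang C Y)) f = cmp C (eta M (one C)) (bang C X))"
proof -
  have X: "X \<in> Ob C" and TY: "Tob M Y \<in> Ob C" using f hom_ob by blast+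
  have 1: "kcomp C M (prd C Y Y) (kcopy C M Y) f = cmp C (Tar M (diag C Y)) f"
    unfolding kcomp_def kcopy_def by (rule kl_Teta_eta[OF f diag_hom[OF Y]])
  have ff: "fprod C X X f f \<in> Hom C (prd C X X) (prd C (Tob M Y) (Tob M Y))"
    by (rule fprod_hom[OF f f])
  have kt: "ktensor C M X X Y Y f f \<in> Hom C (prd C X X) (Tob M (prd C Y Y))"
    unfolding ktensor_def by (rule comp_hom[OF ff nabla_hom[OF Y Y]])
  have "kcomp C M (prd C Y Y) (ktensor C M X X Y Y f f) (kcopy C M X) =
      cmp C (ktensor C M X X Y Y f f) (diag C X)"
    unfolding kcomp_def kcopy_def by (rule kl_eta[OF kt diag_hom[OF X] prd_ob[OF Y Y]])
  also have "\<dots> = cmp C (nabla M Y Y) (cmp C (fprod C X X f f) (diag C X))"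
    unfolding ktensor_def using cassoc[OF diag_hom[OF X] ff nabla_hom[OF Y Y]] by simp
  also have "\<dots> = cmp C (nabla M Y Y) (tup C f f)"
    unfolding diag_def using fprod_tup[OF f f id_hom[OF X] id_hom[OF X]] id_r[OF f] by simp
  finally have 2: "kcomp C M (prd C Y Y) (ktensor C M X X Y Y f f) (kcopy C M X) =
      cmp C (nabla M Y Y) (tup C f f)" .
  have 3: "kcomp C M (one C) (kdel C M Y) f = cmp C (Tar M (bang C Y)) f"
    unfolding kcomp_def kdel_def by (rule kl_Teta_eta[OF f bang_hom[OF Y]])
  show ?thesis using 1 2 3 unfolding deterministic_def kdel_def by simp
qed

lemma eq_copy:
  assumes f: "f \<in> Hom C X (Tob M Y)" and Y: "Y \<in> Ob C"
    and e: "cmp C (eta M (Tob M Y)) f = cmp C (Tar M (eta M Y)) f"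
  shows "cmp C (Tar M (diag C Y)) f = cmp C (nabla M Y Y) (tup C f f)"
proof -
  have TY: "Tob M Y \<in> Ob C" using Y Tob_ob by blast
  have YY: "prd C Y Y \<in> Ob C" using Y prd_ob by blast
  define H where "H = cmp C (nabla M Y Y) (diag C (Tob M Y))"
  have H: "H \<in> Hom C (Tob M Y) (Tob M (prd C Y Y))"
    unfolding H_def by (rule comp_hom[OF diag_hom[OF TY] nabla_hom[OF Y Y]])
  have eY: "eta M Y \<in> Hom C Y (Tob M Y)" using eta_hom[OF Y] .
  have He: "cmp C H (eta M Y) = cmp C (eta M (prd C Y Y)) (diag C Y)"
  proof -
    have "cmp C H (eta M Y) = cmp C (nabla M Y Y) (cmp C (diag C (Tob M Y)) (eta M Y))"
      unfolding H_def using cassoc[OF eY diag_hom[OF TY] nabla_hom[OF Y Y]] by simp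
    also have "\<dots> = cmp C (nabla M Y Y) (tup C (eta M Y) (eta M Y))"
      using diag_comp[OF eY] by simp
    also have "\<dots> = cmp C (nabla M Y Y) (cmp C (fprod C Y Y (eta M Y) (eta M Y)) (diag C Y))"
      unfolding diag_def using fprod_tup[OF eY eY id_hom[OF Y] id_hom[OF Y]] id_r[OF eY] by simp
    also have "\<dots> = cmp C (eta M (prd C Y Y)) (diag C Y)"
      using cassoc[OF diag_hom[OF Y] fprod_hom[OF eY eY] nabla_hom[OF Y Y]] nabla_eta[OF Y Y] by simp
    finally show ?thesis .
  qed
  have "cmp C (nabla M Y Y) (tup C f f) = cmp C H f"
    unfolding H_def using cassoc[OF f diag_hom[OF TY] nabla_hom[OF Y Y]] diag_comp[OF f] by simp
  also have "\<dots> = cmp C (mu M (prd C Y Y)) (cmp C (Tar M H) (cmp C (eta M (Tob M Y)) f))"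
    using kl_eta[OF H f YY] by simp
  also have "\<dots> = cmp C (mu M (prd C Y Y)) (cmp C (Tar M H) (cmp C (Tar M (eta M Y)) f))"
    using e by simp
  also have "\<dots> = cmp C (mu M (prd C Y Y)) (cmp C (Tar M (cmp C H (eta M Y))) f)"
    using cassoc[OF f Tar_hom[OF eY] Tar_hom[OF H]] Tar_comp[OF eY H] by simp
  also have "\<dots> = cmp C (Tar M (diag C Y)) f"
    unfolding He by (rule kl_Teta_eta[OF f diag_hom[OF Y]])
  finally show ?thesis by (rule sym)
qed

lemma eq_del:
  assumes f: "f \<in> Hom C X (Tob M Y)" and Y: "Y \<in> Ob C"
    and e: "cmp C (eta M (Tob M Y)) f = cmp C (Tar M (eta M Y)) f"
  shows "cmp C (Tar M (bang C Y)) f = cmp C (eta M (one C)) (bang C X)"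
proof -
  have X: "X \<in> Ob C" using f hom_ob by blast
  have TY: "Tob M Y \<in> Ob C" using Y Tob_ob by blast
  have O: "one C \<in> Ob C" by (rule one_ob)
  have T1: "Tob M (one C) \<in> Ob C" using O Tob_ob by blast
  have b: "bang C Y \<in> Hom C Y (one C)" using bang_hom[OF Y] .
  have Tb: "Tar M (bang C Y) \<in> Hom C (Tob M Y) (Tob M (one C))" using Tar_hom[OF b] .
  define g where "g = cmp C (Tar M (bang C Y)) f"
  have g: "g \<in> Hom C X (Tob M (one C))" unfolding g_def by (rule comp_hom[OF f Tb])
  have e1: "eta M (one C) \<in> Hom C (one C) (Tob M (one C))" using eta_hom[OF O] .
  have eT1: "eta M (Tob M (one C)) \<in> Hom C (Tob M (one C)) (Tob M (Tob M (one C)))"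
    using eta_hom[OF T1] .
  have eTY: "eta M (Tob M Y) \<in> Hom C (Tob M Y) (Tob M (Tob M Y))" using eta_hom[OF TY] .
  have eY: "eta M Y \<in> Hom C Y (Tob M Y)" using eta_hom[OF Y] .
  have ge: "cmp C (eta M (Tob M (one C))) g = cmp C (Tar M (eta M (one C))) g"
  proof -
    have "cmp C (eta M (Tob M (one C))) g = cmp C (cmp C (eta M (Tob M (one C))) (Tar M (bang C Y))) f"
      unfolding g_def by (rule cassoc[OF f Tb eT1])
    also have "\<dots> = cmp C (cmp C (Tar M (Tar M (bang C Y))) (eta M (Tob M Y))) f"
      using eta_nat[OF Tb] by simp
    also have "\<dots> = cmp C (Tar M (Tar M (bang C Y))) (cmp C (eta M (Tob M Y)) f)"
      using cassoc[OF f eTY Tar_hom[OF Tb]] by simp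
    also have "\<dots> = cmp C (Tar M (Tar M (bang C Y))) (cmp C (Tar M (eta M Y)) f)"
      using e by simp
    also have "\<dots> = cmp C (Tar M (cmp C (Tar M (bang C Y)) (eta M Y))) f"
      using cassoc[OF f Tar_hom[OF eY] Tar_hom[OF Tb]] Tar_comp[OF eY Tb] by simp
    also have "\<dots> = cmp C (Tar M (cmp C (eta M (one C)) (bang C Y))) f"
      using eta_nat[OF b] by simp
    also have "\<dots> = cmp C (Tar M (eta M (one C))) g"
      unfolding g_def using Tar_comp[OF b e1] cassoc[OF f Tb Tar_hom[OF e1]] by simp
    finally show ?thesis .
  qed
  have bT: "bang C (Tob M (one C)) \<in> Hom C (Tob M (one C)) (one C)" using bang_hom[OF T1] .
  have "g = cmp C (idt C (Tob M (one C))) g" using id_l[OF g] by simp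
  also have "\<dots> = cmp C (Tar M (cmp C (bang C (Tob M (one C))) (eta M (one C)))) g"
    using bang_uniq[OF comp_hom[OF e1 bT]] bang_uniq[OF id_hom[OF O]] Tar_id[OF O] by simp
  also have "\<dots> = cmp C (Tar M (bang C (Tob M (one C)))) (cmp C (Tar M (eta M (one C))) g)"
    using Tar_comp[OF e1 bT] cassoc[OF g Tar_hom[OF e1] Tar_hom[OF bT]] by simp
  also have "\<dots> = cmp C (Tar M (bang C (Tob M (one C)))) (cmp C (eta M (Tob M (one C))) g)"
    using ge by simp
  also have "\<dots> = cmp C (cmp C (eta M (one C)) (bang C (Tob M (one C)))) g"
    using cassoc[OF g eT1 Tar_hom[OF bT]] eta_nat[OF bT] by simp
  also have "\<dots> = cmp C (eta M (one C)) (bang C X)"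
    using cassoc[OF g bT e1] bang_uniq[OF comp_hom[OF g bT]] by simp
  finally show ?thesis unfolding g_def .
qed

lemma samp_lemma:
  assumes g: "g \<in> Hom C Z (Tob M Y)" and Y: "Y \<in> Ob C"
    and cp: "cmp C (Tar M (diag C Y)) g = cmp C (nabla M Y Y) (tup C g g)"
    and dl: "cmp C (Tar M (bang C Y)) g = cmp C (eta M (one C)) (bang C Z)"
  shows "cmp C (kforce_pow C M Y n) (cmp C (ndiag C (Tob M Y) n) g) = cmp C (Tar M (ndiag C Y n)) g"
proof (induction n)
  case 0
  have TY: "Tob M Y \<in> Ob C" by (rule Tob_ob[OF Y])
  have "cmp C (bang C (Tob M Y)) g = bang C Z"
    by (rule bang_uniq[OF comp_hom[OF g bang_hom[OF TY]]])
  then show ?case using dl by simp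
next
  case (Suc n)
  have TY: "Tob M Y \<in> Ob C" by (rule Tob_ob[OF Y])
  have On: "opow C Y n \<in> Ob C" by (rule opow_ob[OF Y])
  have Pn: "kforce_pow C M Y n \<in> Hom C (opow C (Tob M Y) n) (Tob M (opow C Y n))"
    by (rule kforce_pow_hom[OF Y])
  have Dn: "ndiag C (Tob M Y) n \<in> Hom C (Tob M Y) (opow C (Tob M Y) n)" by (rule ndiag_hom[OF TY])
  have dn: "ndiag C Y n \<in> Hom C Y (opow C Y n)" by (rule ndiag_hom[OF Y])
  have iTY: "idt C (Tob M Y) \<in> Hom C (Tob M Y) (Tob M Y)" by (rule id_hom[OF TY])
  have iY: "idt C Y \<in> Hom C Y Y" by (rule id_hom[OF Y])
  have Dg: "cmp C (ndiag C (Tob M Y) n) g \<in> Hom C Z (opow C (Tob M Y) n)" by (rule comp_hom[OF g Dn])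
  have F: "fprod C (opow C (Tob M Y) n) (Tob M Y) (kforce_pow C M Y n) (idt C (Tob M Y))
     \<in> Hom C (prd C (opow C (Tob M Y) n) (Tob M Y)) (prd C (Tob M (opow C Y n)) (Tob M Y))"
    by (rule fprod_hom[OF Pn iTY])
  have T: "tup C (cmp C (ndiag C (Tob M Y) n) g) g \<in> Hom C Z (prd C (opow C (Tob M Y) n) (Tob M Y))"
    by (rule tup_hom[OF Dg g])
  have "cmp C (kforce_pow C M Y (Suc n)) (cmp C (ndiag C (Tob M Y) (Suc n)) g)
     = cmp C (cmp C (nabla M (opow C Y n) Y)
          (fprod C (opow C (Tob M Y) n) (Tob M Y) (kforce_pow C M Y n) (idt C (Tob M Y))))
         (tup C (cmp C (ndiag C (Tob M Y) n) g) g)"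
    unfolding kforce_pow.simps ktensor_def kforce_def ndiag.simps
    using tup_comp[OF Dn iTY g] id_l[OF g] by simp
  also have "\<dots> = cmp C (nabla M (opow C Y n) Y)
        (tup C (cmp C (kforce_pow C M Y n) (cmp C (ndiag C (Tob M Y) n) g)) (cmp C (idt C (Tob M Y)) g))"
    using cassoc[OF T F nabla_hom[OF On Y]] fprod_tup[OF Pn iTY Dg g] by simp
  also have "\<dots> = cmp C (nabla M (opow C Y n) Y) (tup C (cmp C (Tar M (ndiag C Y n)) g) g)"
    using Suc id_l[OF g] by simp
  finally have L: "cmp C (kforce_pow C M Y (Suc n)) (cmp C (ndiag C (Tob M Y) (Suc n)) g)
     = cmp C (nabla M (opow C Y n) Y) (tup C (cmp C (Tar M (ndiag C Y n)) g) g)" .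
  have fp: "fprod C Y Y (ndiag C Y n) (idt C Y) \<in> Hom C (prd C Y Y) (prd C (opow C Y n) Y)"
    by (rule fprod_hom[OF dn iY])
  have TTd: "Tar M (ndiag C Y n) \<in> Hom C (Tob M Y) (Tob M (opow C Y n))" by (rule Tar_hom[OF dn])
  have tgg: "tup C g g \<in> Hom C Z (prd C (Tob M Y) (Tob M Y))" by (rule tup_hom[OF g g])
  have e1: "ndiag C Y (Suc n) = cmp C (fprod C Y Y (ndiag C Y n) (idt C Y)) (diag C Y)"
    unfolding diag_def ndiag.simps using fprod_tup[OF dn iY iY iY] id_r[OF dn] id_l[OF iY] by simp
  have "cmp C (Tar M (ndiag C Y (Suc n))) g
      = cmp C (Tar M (fprod C Y Y (ndiag C Y n) (idt C Y))) (cmp C (Tar M (diag C Y)) g)"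
    unfolding e1 using Tar_comp[OF diag_hom[OF Y] fp]
      cassoc[OF g Tar_hom[OF diag_hom[OF Y]] Tar_hom[OF fp]] by simp
  also have "\<dots> = cmp C (cmp C (Tar M (fprod C Y Y (ndiag C Y n) (idt C Y))) (nabla M Y Y)) (tup C g g)"
    using cp cassoc[OF tgg nabla_hom[OF Y Y] Tar_hom[OF fp]] by simp
  also have "\<dots> = cmp C (nabla M (opow C Y n) Y)
      (cmp C (fprod C (Tob M Y) (Tob M Y) (Tar M (ndiag C Y n)) (Tar M (idt C Y))) (tup C g g))"
    using nabla_nat[OF dn iY] cassoc[OF tgg fprod_hom[OF TTd Tar_hom[OF iY]] nabla_hom[OF On Y]]
    by simp
  also have "\<dots> = cmp C (nabla M (opow C Y n) Y) (tup C (cmp C (Tar M (ndiag C Y n)) g) g)"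
    using fprod_tup[OF TTd Tar_hom[OF iY] g g] Tar_id[OF Y] id_l[OF g] by simp
  finally show ?case using L by simp
qed

lemma eta_cp:
  assumes Y: "Y \<in> Ob C"
  shows "cmp C (Tar M (diag C Y)) (eta M Y) = cmp C (nabla M Y Y) (tup C (eta M Y) (eta M Y))"
proof -
  have eY: "eta M Y \<in> Hom C Y (Tob M Y)" using eta_hom[OF Y] .
  have "cmp C (Tar M (diag C Y)) (eta M Y) = cmp C (eta M (prd C Y Y)) (diag C Y)"
    by (rule eta_nat[OF diag_hom[OF Y]])
  also have "\<dots> = cmp C (nabla M Y Y) (cmp C (fprod C Y Y (eta M Y) (eta M Y)) (diag C Y))"
    using cassoc[OF diag_hom[OF Y] fprod_hom[OF eY eY] nabla_hom[OF Y Y]] nabla_eta[OF Y Y] by simp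
  also have "\<dots> = cmp C (nabla M Y Y) (tup C (eta M Y) (eta M Y))"
    unfolding diag_def using fprod_tup[OF eY eY id_hom[OF Y] id_hom[OF Y]] id_r[OF eY] by simp
  finally show ?thesis .
qed

lemma det_eq:
  assumes f: "f \<in> Hom C X (Tob M Y)" and Y: "Y \<in> Ob C"
    and obs: "observational C M" and det: "deterministic C M X Y f"
  shows "cmp C (eta M (Tob M Y)) f = cmp C (Tar M (eta M Y)) f"
proof -
  have X: "X \<in> Ob C" using f hom_ob by blast
  have TY: "Tob M Y \<in> Ob C" by (rule Tob_ob[OF Y])
  have eY: "eta M Y \<in> Hom C Y (Tob M Y)" using eta_hom[OF Y] .
  have cd: "cmp C (Tar M (diag C Y)) f = cmp C (nabla M Y Y) (tup C f f)"
      "cmp C (Tar M (bang C Y)) f = cmp C (eta M (one C)) (bang C X)"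
    using det det_iff[OF f Y] by auto
  have ecd: "cmp C (Tar M (bang C Y)) (eta M Y) = cmp C (eta M (one C)) (bang C Y)"
    by (rule eta_nat[OF bang_hom[OF Y]])
  have a: "cmp C (eta M (Tob M Y)) f \<in> Hom C X (Tob M (Tob M Y))"
    by (rule comp_hom[OF f eta_hom[OF TY]])
  have b: "cmp C (Tar M (eta M Y)) f \<in> Hom C X (Tob M (Tob M Y))"
    by (rule comp_hom[OF f Tar_hom[OF eY]])
  have "kcomp C M (opow C Y n) (samp C M Y n) (cmp C (eta M (Tob M Y)) f) =
        kcomp C M (opow C Y n) (samp C M Y n) (cmp C (Tar M (eta M Y)) f)" for n
  proof -
    have On: "opow C Y n \<in> Ob C" by (rule opow_ob[OF Y])
    have Pn: "kforce_pow C M Y n \<in> Hom C (opow C (Tob M Y) n) (Tob M (opow C Y n))"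
      by (rule kforce_pow_hom[OF Y])
    have Dn: "ndiag C (Tob M Y) n \<in> Hom C (Tob M Y) (opow C (Tob M Y) n)" by (rule ndiag_hom[OF TY])
    have dn: "ndiag C Y n \<in> Hom C Y (opow C Y n)" by (rule ndiag_hom[OF Y])
    have Se: "samp C M Y n = cmp C (kforce_pow C M Y n) (ndiag C (Tob M Y) n)"
      unfolding samp_def kcomp_def kcopy_n_def by (rule kl_eta[OF Pn Dn On])
    have S: "samp C M Y n \<in> Hom C (Tob M Y) (Tob M (opow C Y n))"
      unfolding Se by (rule comp_hom[OF Dn Pn])
    have "kcomp C M (opow C Y n) (samp C M Y n) (cmp C (eta M (Tob M Y)) f) = cmp C (samp C M Y n) f"
      unfolding kcomp_def by (rule kl_eta[OF S f On])
    also have "\<dots> = cmp C (kforce_pow C M Y n) (cmp C (ndiag C (Tob M Y) n) f)"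
      unfolding Se using cassoc[OF f Dn Pn] by simp
    also have "\<dots> = cmp C (Tar M (ndiag C Y n)) f"
      by (rule samp_lemma[OF f Y cd])
    finally have L: "kcomp C M (opow C Y n) (samp C M Y n) (cmp C (eta M (Tob M Y)) f) =
        cmp C (Tar M (ndiag C Y n)) f" .
    have Sy: "cmp C (samp C M Y n) (eta M Y) = cmp C (eta M (opow C Y n)) (ndiag C Y n)"
    proof -
      have "cmp C (samp C M Y n) (eta M Y) = cmp C (kforce_pow C M Y n) (cmp C (ndiag C (Tob M Y) n) (eta M Y))"
        unfolding Se using cassoc[OF eY Dn Pn] by simp
      also have "\<dots> = cmp C (Tar M (ndiag C Y n)) (eta M Y)"
        by (rule samp_lemma[OF eY Y eta_cp[OF Y] ecd])
      also have "\<dots> = cmp C (eta M (opow C Y n)) (ndiag C Y n)" by (rule eta_nat[OF dn])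
      finally show ?thesis .
    qed
    have "kcomp C M (opow C Y n) (samp C M Y n) (cmp C (Tar M (eta M Y)) f) =
        cmp C (mu M (opow C Y n)) (cmp C (Tar M (cmp C (samp C M Y n) (eta M Y))) f)"
      unfolding kcomp_def using cassoc[OF f Tar_hom[OF eY] Tar_hom[OF S]] Tar_comp[OF eY S] by simp
    also have "\<dots> = cmp C (Tar M (ndiag C Y n)) f"
      unfolding Sy by (rule kl_Teta_eta[OF f dn])
    finally show ?thesis using L by simp
  qed
  then show ?thesis using obs a b Y X unfolding observational_def by blast
qed
end

theorem corollary7p2:
  fixes C :: "('o, 'm) cartcat" and M :: "('o, 'm) cmonad"
    and D :: "'o \<Rightarrow> 'o" and \<theta> :: "'o \<Rightarrow> 'm"
  assumes "is_cartesian_category C"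
    and "is_commutative_monad C M"
    and "observational C M"
    and "\<forall>Y\<in>Ob C. is_equalizer C (Tob M Y) (Tob M (Tob M Y))
            (eta M (Tob M Y)) (Tar M (eta M Y)) (D Y) (\<theta> Y)"
    and "X \<in> Ob C" and "Y \<in> Ob C"
  shows "bij_betw (\<lambda>h. cmp C (\<theta> Y) h) (Hom C X (D Y))
           {f \<in> Hom C X (Tob M Y). deterministic C M X Y f}"
proof -
  interpret cm C M using assms(1,2) by unfold_locales
  have Y: "Y \<in> Ob C" by fact
  have TY: "Tob M Y \<in> Ob C" by (rule Tob_ob[OF Y])
  have eq: "is_equalizer C (Tob M Y) (Tob M (Tob M Y))
            (eta M (Tob M Y)) (Tar M (eta M Y)) (D Y) (\<theta> Y)" using assms(4) Y by blast
  have th: "\<theta> Y \<in> Hom C (D Y) (Tob M Y)" using eq unfolding is_equalizer_def by blast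
  have theq: "cmp C (eta M (Tob M Y)) (\<theta> Y) = cmp C (Tar M (eta M Y)) (\<theta> Y)"
    using eq unfolding is_equalizer_def by blast
  have univ: "\<And>Z h. h \<in> Hom C Z (Tob M Y) \<Longrightarrow>
      cmp C (eta M (Tob M Y)) h = cmp C (Tar M (eta M Y)) h \<Longrightarrow>
      (\<exists>!k. k \<in> Hom C Z (D Y) \<and> cmp C (\<theta> Y) k = h)"
    using eq unfolding is_equalizer_def by blast
  have eY: "eta M Y \<in> Hom C Y (Tob M Y)" by (rule eta_hom[OF Y])
  have equ: "cmp C (eta M (Tob M Y)) (cmp C (\<theta> Y) h) = cmp C (Tar M (eta M Y)) (cmp C (\<theta> Y) h)"
    if h: "h \<in> Hom C X (D Y)" for h
    using cassoc[OF h th eta_hom[OF TY]] cassoc[OF h th Tar_hom[OF eY]] theq by simp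
  show ?thesis unfolding bij_betw_def
  proof (intro conjI)
    show "inj_on (\<lambda>h. cmp C (\<theta> Y) h) (Hom C X (D Y))"
    proof (rule inj_onI)
      fix h1 h2 assume h1: "h1 \<in> Hom C X (D Y)" and h2: "h2 \<in> Hom C X (D Y)"
        and e: "cmp C (\<theta> Y) h1 = cmp C (\<theta> Y) h2"
      have "\<exists>!k. k \<in> Hom C X (D Y) \<and> cmp C (\<theta> Y) k = cmp C (\<theta> Y) h1"
        by (rule univ[OF comp_hom[OF h1 th] equ[OF h1]])
      then show "h1 = h2" using h1 h2 e by metis
    qed
    show "(\<lambda>h. cmp C (\<theta> Y) h) ` Hom C X (D Y) = {f \<in> Hom C X (Tob M Y). deterministic C M X Y f}"
    proof
      show "(\<lambda>h. cmp C (\<theta> Y) h) ` Hom C X (D Y) \<subseteq> {f \<in> Hom C X (Tob M Y). deterministic C M X Y f}"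
      proof
        fix f assume "f \<in> (\<lambda>h. cmp C (\<theta> Y) h) ` Hom C X (D Y)"
        then obtain h where h: "h \<in> Hom C X (D Y)" and fh: "f = cmp C (\<theta> Y) h" by blast
        have f: "f \<in> Hom C X (Tob M Y)" unfolding fh by (rule comp_hom[OF h th])
        have e: "cmp C (eta M (Tob M Y)) f = cmp C (Tar M (eta M Y)) f" unfolding fh by (rule equ[OF h])
        have "deterministic C M X Y f"
          using det_iff[OF f Y] eq_copy[OF f Y e] eq_del[OF f Y e] by simp
        then show "f \<in> {f \<in> Hom C X (Tob M Y). deterministic C M X Y f}" using f by simp
      qed
      show "{f \<in> Hom C X (Tob M Y). deterministic C M X Y f} \<subseteq> (\<lambda>h. cmp C (\<theta> Y) h) ` Hom C X (D Y)"
      proof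
        fix f assume "f \<in> {f \<in> Hom C X (Tob M Y). deterministic C M X Y f}"
        then have f: "f \<in> Hom C X (Tob M Y)" and d: "deterministic C M X Y f" by auto
        have "\<exists>!k. k \<in> Hom C X (D Y) \<and> cmp C (\<theta> Y) k = f"
          by (rule univ[OF f det_eq[OF f Y assms(3) d]])
        then show "f \<in> (\<lambda>h. cmp C (\<theta> Y) h) ` Hom C X (D Y)" by blast
      qed
    qed
  qed
qed

end
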